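(* Let $\theta \in \mathbb{R}^d\setminus\{0\}$, $b \in \mathbb{R}$, and let $f(z)=\sigma(\langle \theta, z\rangle + b)$ with $\sigma(u)=1/(1+e^{-u})$, the predicted label being $\hat y(z)=1$ if $\langle\theta,z\rangle+b\ge 0$ and $\hat y(z)=0$ otherwise. Fix a threshold $\epsilon\in(1/2,1)$ and let $g$ be the counterfactual-explanation map defined below. Let $x\in\mathbb{R}^d$ with $\langle\theta,x\rangle+b\neq 0$, let $c=g(x)$ (the CF) and $c'=g(c)$ (the CCF). Put $m=\frac{c+c'}{2}$, $v=c-c'$, and $s=+1$ if $\hat y(c)=1$, $s=-1$ if $\hat y(c)=0$. Define the substitute classifier $h:\mathbb{R}^d\to\{0,1\}$ by $h(z)=1$ if $s\,\langle v, z-m\rangle\ge 0$ and $h(z)=0$ otherwise. Then $v\neq 0$, $m$ lies on the decision boundary $\{z:\langle\theta,z\rangle+b=0\}$, and $h(z)=\hat y(z)$ for every $z\in\mathbb{R}^d$; i.e. a substitute model with $100\%$ agreement with $f$ is obtained from the single pair $(c,c')$ together with their predicted labels, without any training.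
   Context: Counterfactual explanation map: for an input $z$ with predicted label $\ell=\hat y(z)$, $g(z)$ is the point closest to $z$ in Euclidean distance whose predicted probability of the opposite class $1-\ell$ is at least $\epsilon$; that is, with $t=\log\frac{\epsilon}{1-\epsilon}>0$, $g(z)=\arg\min\{\|w-z\|_2 : \langle\theta,w\rangle+b\ge t\}$ if $\ell=0$, and $g(z)=\arg\min\{\|w-z\|_2 : \langle\theta,w\rangle+b\le -t\}$ if $\ell=1$ (equivalently, $g(z)$ is obtained by moving from $z$ along $\pm\theta$, the gradient direction, until the target-class probability reaches $\epsilon$). The CCF of $x$ is the counterfactual explanation of its counterfactual explanation, $g(g(x))$. The attacker has access only to $c$, $c'$ and their predicted labels, not to $\theta$ or $b$. *)

theory Defs
  imports "HOL-Analysis.Analysis"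
begin

definition sigmoid :: "real \<Rightarrow> real" where
  "sigmoid u = 1 / (1 + exp (- u))"

definition logit_model :: "real ^ 'n \<Rightarrow> real \<Rightarrow> real ^ 'n \<Rightarrow> real" where
  "logit_model \<theta> b z = sigmoid (\<theta> \<bullet> z + b)"

definition pred_label :: "real ^ 'n \<Rightarrow> real \<Rightarrow> real ^ 'n \<Rightarrow> nat" where
  "pred_label \<theta> b z = (if \<theta> \<bullet> z + b \<ge> 0 then 1 else 0)"

text \<open>Counterfactual explanation map with threshold eps, t = log(eps/(1-eps)):
  the Euclidean-closest point in the half-space where the opposite class
  has probability at least eps.\<close>
definition cf_map :: "real ^ 'n \<Rightarrow> real \<Rightarrow> real \<Rightarrow> real ^ 'n \<Rightarrow> real ^ 'n" where
  "cf_map \<theta> b \<epsilon> z =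
     (let t = ln (\<epsilon> / (1 - \<epsilon>)) in
      if pred_label \<theta> b z = 0
      then closest_point {w. \<theta> \<bullet> w + b \<ge> t} z
      else closest_point {w. \<theta> \<bullet> w + b \<le> - t} z)"

end

theory Submission
  imports Defs
begin

lemma proj_ge:
  fixes \<theta> z :: "real ^ 'n" and b r :: real
  assumes "\<theta> \<noteq> 0" "\<theta> \<bullet> z + b \<le> r"
  shows "closest_point {w. \<theta> \<bullet> w + b \<ge> r} z
         = z + ((r - \<theta> \<bullet> z - b) / (\<theta> \<bullet> \<theta>)) *\<^sub>R \<theta>"
proof -
  define \<alpha> where "\<alpha> = (r - \<theta> \<bullet> z - b) / (\<theta> \<bullet> \<theta>)"
  define p where "p = z + \<alpha> *\<^sub>R \<theta>"
  have tt: "\<theta> \<bullet> \<theta> > 0" using assms(1) by simp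
  have a0: "\<alpha> \<ge> 0" unfolding \<alpha>_def using tt assms(2) by simp
  have pv: "\<theta> \<bullet> p + b = r" unfolding p_def \<alpha>_def using tt
    by (simp add: inner_add_right field_simps)
  have S: "{w. \<theta> \<bullet> w + b \<ge> r} = {w. \<theta> \<bullet> w \<ge> r - b}" by auto
  have "p = closest_point {w. \<theta> \<bullet> w + b \<ge> r} z"
  proof (rule closest_point_unique)
    show "convex {w. \<theta> \<bullet> w + b \<ge> r}" unfolding S by (rule convex_halfspace_ge)
    show "closed {w. \<theta> \<bullet> w + b \<ge> r}" unfolding S by (rule closed_halfspace_ge)
    show "p \<in> {w. \<theta> \<bullet> w + b \<ge> r}" using pv by simp
    show "\<forall>y\<in>{w. \<theta> \<bullet> w + b \<ge> r}. dist z p \<le> dist z y"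
    proof
      fix y assume "y \<in> {w. \<theta> \<bullet> w + b \<ge> r}"
      hence "\<theta> \<bullet> (y - p) \<ge> 0" using pv by (simp add: inner_diff_right)
      hence yp: "(y - p) \<bullet> \<theta> \<ge> 0" by (simp add: inner_commute)
      have sq: "norm (u + w)^2 = norm u^2 + 2*(u \<bullet> w) + norm w^2" for u w :: "real ^ 'n"
        by (simp add: power2_norm_eq_inner inner_add_left inner_add_right inner_commute)
      have e: "y - z = (y - p) + \<alpha> *\<^sub>R \<theta>" unfolding p_def by simp
      have "norm (y - z)^2 = norm (y-p)^2 + 2 * \<alpha> * ((y - p) \<bullet> \<theta>) + norm (\<alpha> *\<^sub>R \<theta>)^2"
        unfolding e using sq[of "y - p" "\<alpha> *\<^sub>R \<theta>"] by (simp only: inner_scaleR_right mult.assoc)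
      also have "\<dots> \<ge> norm (\<alpha> *\<^sub>R \<theta>)^2" using yp a0 by simp
      finally have "norm (p - z)^2 \<le> norm (y - z)^2" unfolding p_def by simp
      hence "norm (p - z) \<le> norm (y - z)" by (simp add: power_mono_iff)
      thus "dist z p \<le> dist z y" by (simp add: dist_norm norm_minus_commute)
    qed
  qed
  thus ?thesis unfolding p_def \<alpha>_def by simp
qed

lemma proj_le:
  fixes \<theta> z :: "real ^ 'n" and b t :: real
  assumes "\<theta> \<noteq> 0" "\<theta> \<bullet> z + b \<ge> - t"
  shows "closest_point {w. \<theta> \<bullet> w + b \<le> - t} z
         = z + ((- t - \<theta> \<bullet> z - b) / (\<theta> \<bullet> \<theta>)) *\<^sub>R \<theta>"
proof -
  have S: "{w. \<theta> \<bullet> w + b \<le> - t} = {w. (-\<theta>) \<bullet> w + (-b) \<ge> t}" by auto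
  have "closest_point {w. (-\<theta>) \<bullet> w + (-b) \<ge> t} z
     = z + ((t - (-\<theta>) \<bullet> z - (-b)) / ((-\<theta>) \<bullet> (-\<theta>))) *\<^sub>R (-\<theta>)"
    by (rule proj_ge) (use assms in auto)
  also have "\<dots> = z + ((- t - \<theta> \<bullet> z - b) / (\<theta> \<bullet> \<theta>)) *\<^sub>R \<theta>"
  proof -
    have "(t - (-\<theta>) \<bullet> z - (-b)) / ((-\<theta>) \<bullet> (-\<theta>)) = - ((- t - \<theta> \<bullet> z - b) / (\<theta> \<bullet> \<theta>))"
      by (subst minus_divide_left) simp
    thus ?thesis by (simp only: scaleR_minus_left scaleR_minus_right minus_minus)
  qed
  finally show ?thesis unfolding S .
qed

lemma final_step:
  fixes \<theta> c c' :: "real ^ 'n" and b \<gamma> s :: real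
  assumes "\<theta> \<noteq> 0" "c' = c + \<gamma> *\<^sub>R \<theta>" "s * \<gamma> < 0"
    and "(\<theta> \<bullet> c + b) + (\<theta> \<bullet> c' + b) = 0"
  shows "c - c' \<noteq> 0 \<and> \<theta> \<bullet> ((1/2) *\<^sub>R (c + c')) + b = 0 \<and>
     (\<forall>z. (if s * ((c - c') \<bullet> (z - (1/2) *\<^sub>R (c + c'))) \<ge> 0 then (1::nat) else 0) = pred_label \<theta> b z)"
proof (intro conjI allI)
  have v: "c - c' = (- \<gamma>) *\<^sub>R \<theta>" using assms(2) by simp
  have g: "\<gamma> \<noteq> 0" using assms(3) by auto
  show "c - c' \<noteq> 0" using v g assms(1) by simp
  have m: "\<theta> \<bullet> ((1/2) *\<^sub>R (c + c')) + b = 0"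
    using assms(4) by (simp add: inner_add_right algebra_simps)
  show "\<theta> \<bullet> ((1/2) *\<^sub>R (c + c')) + b = 0" by (rule m)
  fix z
  have "s * ((c - c') \<bullet> (z - (1/2) *\<^sub>R (c + c'))) = (- (s * \<gamma>)) * (\<theta> \<bullet> z + b)"
  proof -
    have "(c - c') \<bullet> (z - (1/2) *\<^sub>R (c + c')) = (- \<gamma>) * (\<theta> \<bullet> z - \<theta> \<bullet> ((1/2) *\<^sub>R (c + c')))"
      unfolding v by (simp add: inner_diff_right field_simps)
    also have "\<dots> = (- \<gamma>) * (\<theta> \<bullet> z - (- b))"
    proof -
      have "\<theta> \<bullet> ((1/2) *\<^sub>R (c + c')) = - b" using m by linarith
      thus ?thesis by simp
    qed
    also have "\<dots> = (- \<gamma>) * (\<theta> \<bullet> z + b)" by simp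
    finally show ?thesis by simp
  qed
  note e1 = this
  have e2: "- (s * \<gamma>) > 0" using assms(3) by simp
  have e3: "(0 \<le> k * u) = (0 \<le> u)" if "k > 0" for k u :: real
    using that by (auto simp: zero_le_mult_iff)
  have "(s * ((c - c') \<bullet> (z - (1/2) *\<^sub>R (c + c'))) \<ge> 0) = (\<theta> \<bullet> z + b \<ge> 0)"
    unfolding e1 by (rule e3[OF e2])
  thus "(if s * ((c - c') \<bullet> (z - (1/2) *\<^sub>R (c + c'))) \<ge> 0 then (1::nat) else 0) = pred_label \<theta> b z"
    unfolding pred_label_def by simp
qed

theorem mainTheorem1:
  fixes \<theta> x :: "real ^ 'n" and b \<epsilon> :: real
  assumes "\<theta> \<noteq> 0"
    and "1/2 < \<epsilon>" and "\<epsilon> < 1"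
    and "\<theta> \<bullet> x + b \<noteq> 0"
  shows "let c = cf_map \<theta> b \<epsilon> x;
             c' = cf_map \<theta> b \<epsilon> c;
             m = (1/2) *\<^sub>R (c + c');
             v = c - c';
             s = (if pred_label \<theta> b c = 1 then 1 else (-1::real));
             h = (\<lambda>z. if s * (v \<bullet> (z - m)) \<ge> 0 then (1::nat) else 0)
         in v \<noteq> 0 \<and> \<theta> \<bullet> m + b = 0 \<and> (\<forall>z. h z = pred_label \<theta> b z)"
proof -
  define t where "t = ln (\<epsilon> / (1 - \<epsilon>))"
  have "\<epsilon> / (1 - \<epsilon>) > 1" using assms(2,3) by (simp add: field_simps)
  hence t0: "t > 0" unfolding t_def by simp
  have q: "\<theta> \<bullet> \<theta> > 0" using assms(1) by simp
  have cf0: "cf_map \<theta> b \<epsilon> z = z + ((t - \<theta> \<bullet> z - b) / (\<theta> \<bullet> \<theta>)) *\<^sub>R \<theta>"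
    if "\<theta> \<bullet> z + b < 0" for z
    using that t0 unfolding cf_map_def pred_label_def t_def[symmetric] Let_def
    by (simp add: proj_ge[OF assms(1)])
  have cf1: "cf_map \<theta> b \<epsilon> z = z + ((- t - \<theta> \<bullet> z - b) / (\<theta> \<bullet> \<theta>)) *\<^sub>R \<theta>"
    if "\<theta> \<bullet> z + b \<ge> 0" for z
    using that t0 unfolding cf_map_def pred_label_def t_def[symmetric] Let_def
    by (simp add: proj_le[OF assms(1)])
  have val: "\<theta> \<bullet> (z + ((r - \<theta> \<bullet> z - b) / (\<theta> \<bullet> \<theta>)) *\<^sub>R \<theta>) + b = r" for z r
    using q by (simp add: inner_add_right field_simps)
  define c where "c = cf_map \<theta> b \<epsilon> x"
  define c' where "c' = cf_map \<theta> b \<epsilon> c"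
  have main: "c - c' \<noteq> 0 \<and> \<theta> \<bullet> ((1/2) *\<^sub>R (c + c')) + b = 0 \<and>
     (\<forall>z. (if (if pred_label \<theta> b c = 1 then 1 else (-1::real)) * ((c - c') \<bullet> (z - (1/2) *\<^sub>R (c + c'))) \<ge> 0 then (1::nat) else 0) = pred_label \<theta> b z)"
  proof (cases "\<theta> \<bullet> x + b < 0")
    case True
    have cv: "\<theta> \<bullet> c + b = t" unfolding c_def cf0[OF True] by (rule val)
    have c'e: "c' = c + ((- t - \<theta> \<bullet> c - b) / (\<theta> \<bullet> \<theta>)) *\<^sub>R \<theta>"
      unfolding c'_def using cv t0 by (simp add: cf1)
    have c'v: "\<theta> \<bullet> c' + b = - t" unfolding c'e by (rule val)
    have pl: "pred_label \<theta> b c = 1" unfolding pred_label_def using cv t0 by simp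
    have e: "c' = c + ((- 2 * t) / (\<theta> \<bullet> \<theta>)) *\<^sub>R \<theta>" using c'e cv
    proof -
      have h: "- t - \<theta> \<bullet> c - b = - 2 * t" using cv by simp
      show ?thesis unfolding c'e h by (rule refl)
    qed
    have "1 * ((- 2 * t) / (\<theta> \<bullet> \<theta>)) < 0" using t0 q by (simp add: divide_neg_pos)
    from final_step[where b=b, OF assms(1) e this] show ?thesis unfolding pl using cv c'v by simp
  next
    case False
    hence F: "\<theta> \<bullet> x + b \<ge> 0" by simp
    have cv: "\<theta> \<bullet> c + b = - t" unfolding c_def cf1[OF F] by (rule val)
    have c'e: "c' = c + ((t - \<theta> \<bullet> c - b) / (\<theta> \<bullet> \<theta>)) *\<^sub>R \<theta>"
      unfolding c'_def using cv t0 by (simp add: cf0)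
    have c'v: "\<theta> \<bullet> c' + b = t" unfolding c'e by (rule val)
    have pl: "pred_label \<theta> b c = 0" unfolding pred_label_def using cv t0 by simp
    have e: "c' = c + ((2 * t) / (\<theta> \<bullet> \<theta>)) *\<^sub>R \<theta>" using c'e cv
    proof -
      have h: "t - \<theta> \<bullet> c - b = 2 * t" using cv by simp
      show ?thesis unfolding c'e h by (rule refl)
    qed
    have "(-1) * ((2 * t) / (\<theta> \<bullet> \<theta>)) < 0" using t0 q by simp
    from final_step[where b=b, OF assms(1) e this] show ?thesis unfolding pl using cv c'v by simp
  qed
  show ?thesis using main unfolding Let_def c_def c'_def .
qed

end
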